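(* Let $a,b,k$ be positive integers. There exists an integer $N=N(a,b,k)$ such that for every $n\ge N$, BoxWaiter has a winning strategy in the game $WCBox(n\times k,(a:b))$.
   Context: $WCBox(n\times k,(a:b))$ is the $(a:b)$ Waiter-Client game whose board is the disjoint union of $n$ sets ("boxes") of size $k$ each and whose target sets are the boxes: in each round BoxWaiter selects $a+b$ unclaimed elements, BoxClient claims $a$ of them and BoxWaiter the rest (in the last round, if $t$ elements remain, BoxWaiter takes all if $t\le b$, otherwise BoxClient takes $t-b$ and BoxWaiter the rest). BoxWaiter wins if by the end BoxClient has claimed all elements of some box; otherwise BoxClient wins. *)

theory Defs
  imports Main
begin

definition box_board :: "nat \<Rightarrow> nat \<Rightarrow> (nat \<times> nat) set" where
  "box_board n k = {0..<n} \<times> {0..<k}"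

definition box :: "nat \<Rightarrow> nat \<Rightarrow> (nat \<times> nat) set" where
  "box k i = {i} \<times> {0..<k}"

text \<open>waiter_wins a b n k U C: in the (a:b) Waiter-Client game WCBox(n x k),
  from the position where U is the set of unclaimed elements and C is the set
  of elements claimed so far by BoxClient, BoxWaiter (moving next) has a
  winning strategy.  Defined as the least fixed point (the game is finite).\<close>

inductive waiter_wins :: "nat \<Rightarrow> nat \<Rightarrow> nat \<Rightarrow> nat \<Rightarrow> (nat \<times> nat) set \<Rightarrow> (nat \<times> nat) set \<Rightarrow> bool"
  for a b n k where
  finished:
    "\<lbrakk> U = {}; \<exists>i<n. box k i \<subseteq> C \<rbrakk> \<Longrightarrow> waiter_wins a b n k U C"
| round:
    "\<lbrakk> a + b \<le> card U; S \<subseteq> U; card S = a + b;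
       \<forall>A. A \<subseteq> S \<and> card A = a \<longrightarrow> waiter_wins a b n k (U - S) (C \<union> A) \<rbrakk>
     \<Longrightarrow> waiter_wins a b n k U C"
| last_waiter_all:
    "\<lbrakk> 0 < card U; card U < a + b; card U \<le> b; waiter_wins a b n k {} C \<rbrakk>
     \<Longrightarrow> waiter_wins a b n k U C"
| last_split:
    "\<lbrakk> 0 < card U; card U < a + b; b < card U;
       \<forall>A. A \<subseteq> U \<and> card A = card U - b \<longrightarrow> waiter_wins a b n k {} (C \<union> A) \<rbrakk>
     \<Longrightarrow> waiter_wins a b n k U C"

definition box_waiter_wins :: "nat \<Rightarrow> nat \<Rightarrow> nat \<Rightarrow> nat \<Rightarrow> bool" where
  "box_waiter_wins a b n k = waiter_wins a b n k (box_board n k) {}"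

end

theory Submission
  imports Defs
begin

lemma fst_box: "y \<in> box k i \<Longrightarrow> fst y = i"
  by (auto simp: box_def)

lemma mono_win:
  assumes "0 < a + b" "finite U" "i < n" "box k i \<subseteq> C"
  shows "waiter_wins a b n k U C"
  using assms(2-4)
proof (induction "card U" arbitrary: U C rule: less_induct)
  case less
  show ?case
  proof (cases "a + b \<le> card U")
    case True
    then obtain S where S: "S \<subseteq> U" "card S = a+b"
      using obtain_subset_with_card_n by metis
    have "waiter_wins a b n k (U - S) (C \<union> A)" if "A \<subseteq> S \<and> card A = a" for A
    proof (rule less.hyps)
      have "finite S" using S less.prems(1) finite_subset by blast
      then have "card (U - S) = card U - card S" using S by (simp add: card_Diff_subset)
      then show "card (U - S) < card U"
        using S assms(1) True by arith
      show "finite (U - S)" using less.prems(1) by simp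
      show "i < n" by fact
      show "box k i \<subseteq> C \<union> A" using less.prems(3) by blast
    qed
    note W = this
    show ?thesis by (rule round[OF True S(1) S(2)]) (use W in auto)
  next
    case False
    have fin: "waiter_wins a b n k {} C'" if "C \<subseteq> C'" for C'
      using finished less.prems that by blast
    show ?thesis
    proof (cases "card U = 0")
      case True
      then have "U = {}" using less.prems(1) by simp
      then show ?thesis using fin by simp
    next
      case nz: False
      show ?thesis
      proof (cases "card U \<le> b")
        case True
        show ?thesis by (rule last_waiter_all) (use nz False fin True in auto)
      next
        case gt: False
        show ?thesis by (rule last_split) (use nz False fin gt in auto)
      qed
    qed
  qed
qed

definition good :: "nat \<Rightarrow> nat \<Rightarrow> nat \<Rightarrow> (nat \<times> nat) set \<Rightarrow> (nat \<times> nat) set \<Rightarrow> nat \<Rightarrow> bool" where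
  "good n k r U C i \<longleftrightarrow> i < n \<and> box k i \<subseteq> U \<union> C \<and> card (box k i \<inter> U) \<le> r"

lemma level:
  assumes a: "0 < a"
  shows "finite U \<Longrightarrow> I \<subseteq> {i. good n k r U C i} \<Longrightarrow> card I = (a+b)^r \<Longrightarrow> waiter_wins a b n k U C"
proof (induction r arbitrary: U C I)
  case 0
  then obtain i where i: "i \<in> I" by (metis card_1_singletonE insertI1 power_0)
  then have g: "good n k 0 U C i" using 0 by blast
  have "finite (box k i \<inter> U)" using 0 by simp
  then have "box k i \<inter> U = {}" using g by (simp add: good_def)
  then have "box k i \<subseteq> C" using g by (auto simp: good_def)
  then show ?case using mono_win[of a b U i n k C] a 0 g by (simp add: good_def)
next
  case (Suc r)
  have inner: "finite U \<Longrightarrow> J \<subseteq> {i. good n k r U C i} \<Longrightarrow> K \<subseteq> {i. good n k (Suc r) U C i}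
     \<Longrightarrow> J \<inter> K = {} \<Longrightarrow> finite J \<Longrightarrow> finite K \<Longrightarrow> (a+b)^r \<le> card J + t \<Longrightarrow> (a+b)*t \<le> card K
     \<Longrightarrow> waiter_wins a b n k U C" for t U C J K
  proof (induction t arbitrary: U C J K)
    case 0
    then have "(a+b)^r \<le> card J" by simp
    then obtain I where "I \<subseteq> J" "card I = (a+b)^r"
      by (meson obtain_subset_with_card_n)
    then show ?case using Suc.IH[of U I C] 0 by auto
  next
    case (Suc t)
    then have "a+b \<le> card K" by simp
    then obtain D where D: "D \<subseteq> K" "card D = a+b"
      by (meson obtain_subset_with_card_n)
    show ?case
    proof (cases "\<exists>i\<in>D. box k i \<inter> U = {}")
      case True
      then obtain i where i: "i \<in> D" "box k i \<inter> U = {}" by blast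
      then have g: "good n k (Suc r) U C i" using D Suc.prems by blast
      then have "box k i \<subseteq> C" using i by (auto simp: good_def)
      then show ?thesis using mono_win[of a b U i n k C] a Suc.prems g by (simp add: good_def)
    next
      case False
      define x where "x = (\<lambda>i. SOME y. y \<in> box k i \<inter> U)"
      have xin: "x i \<in> box k i \<inter> U" if "i \<in> D" for i
        using False that unfolding x_def by (metis all_not_in_conv someI_ex)
      have fx: "fst (x i) = i" if "i \<in> D" for i using xin[OF that] fst_box by blast
      define S where "S = x ` D"
      have injx: "inj_on x D" by (metis fx inj_onI)
      have cS: "card S = a + b" using D injx by (simp add: S_def card_image)
      have SU: "S \<subseteq> U" using xin S_def by blast
      have fS: "fst ` S = D" using fx S_def by force
      have injf: "inj_on fst S" unfolding S_def using fx by (smt (verit) image_iff inj_onI)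
      have finD: "finite D" using D Suc.prems(6) finite_subset by blast
      have cU: "a + b \<le> card U" using SU cS Suc.prems(1) card_mono by metis
      have boxS: "box k j \<inter> S = {}" if "j \<notin> D" for j
        using that fx fst_box S_def by fastforce
      have "waiter_wins a b n k (U - S) (C \<union> A)" if A: "A \<subseteq> S" "card A = a" for A
      proof -
        define J' where "J' = J \<union> fst ` A"
        define K' where "K' = K - D"
        have fA: "fst ` A \<subseteq> D" using A fS by blast
        have cfA: "card (fst ` A) = a" using A injf by (metis card_image inj_on_subset)
        have JD: "J \<inter> D = {}" using D Suc.prems(4) by blast
        have gJ: "good n k r (U - S) (C \<union> A) j" if "j \<in> J" for j
        proof -
          have g: "good n k r U C j" using that Suc.prems by blast
          have jD: "j \<notin> D" using JD that by blast
          have "box k j \<subseteq> (U - S) \<union> (C \<union> A)" using g boxS[OF jD] by (auto simp: good_def)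
          moreover have "card (box k j \<inter> (U - S)) \<le> card (box k j \<inter> U)"
            using Suc.prems(1) by (intro card_mono) auto
          ultimately show ?thesis using g by (auto simp: good_def)
        qed
        have gA: "good n k r (U - S) (C \<union> A) i" if iA: "i \<in> fst ` A" for i
        proof -
          have iD: "i \<in> D" using that fA by blast
          have g: "good n k (Suc r) U C i" using iD D Suc.prems by blast
          obtain y where y: "y \<in> A" "fst y = i" using iA by blast
          then obtain j where j: "j \<in> D" "y = x j" using A S_def by blast
          then have "j = i" using fx y by metis
          then have xA: "x i \<in> A" using y j by simp
          have sub: "box k i \<subseteq> (U - S) \<union> (C \<union> A)"
          proof
            fix y assume y: "y \<in> box k i"
            show "y \<in> (U - S) \<union> (C \<union> A)"
            proof (cases "y \<in> S")
              case True
              then obtain i' where "i' \<in> D" "y = x i'" using S_def by blast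
              then have "y = x i" using fx fst_box[OF y] by metis
              then show ?thesis using xA by blast
            next
              case False
              then show ?thesis using y g by (auto simp: good_def)
            qed
          qed
          have "box k i \<inter> (U - S) \<subseteq> (box k i \<inter> U) - {x i}" using xin[OF iD] S_def iD by blast
          then have "card (box k i \<inter> (U - S)) \<le> card ((box k i \<inter> U) - {x i})"
            using Suc.prems(1) by (intro card_mono) auto
          also have "\<dots> = card (box k i \<inter> U) - 1" using xin[OF iD] Suc.prems(1) by simp
          finally have "card (box k i \<inter> (U - S)) \<le> r" using g unfolding good_def by linarith
          then show ?thesis using sub g by (simp add: good_def)
        qed
        have gK: "good n k (Suc r) (U - S) (C \<union> A) j" if "j \<in> K'" for j
        proof -
          have g: "good n k (Suc r) U C j" using that Suc.prems K'_def by blast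
          have jD: "j \<notin> D" using that K'_def by blast
          have "box k j \<subseteq> (U - S) \<union> (C \<union> A)" using g boxS[OF jD] by (auto simp: good_def)
          moreover have "card (box k j \<inter> (U - S)) \<le> card (box k j \<inter> U)"
            using Suc.prems(1) by (intro card_mono) auto
          ultimately show ?thesis using g by (auto simp: good_def)
        qed
        have finA: "finite (fst ` A)" using fA finD finite_subset by blast
        have cJ': "card J' = card J + a"
          unfolding J'_def using JD fA cfA Suc.prems(5) finA
          by (subst card_Un_disjoint) auto
        have cK': "card K' = card K - (a+b)"
          unfolding K'_def using D finD by (simp add: card_Diff_subset)
        show ?thesis
        proof (rule Suc.IH)
          show "finite (U - S)" using Suc.prems(1) by simp
          show "J' \<subseteq> {i. good n k r (U - S) (C \<union> A) i}" using gJ gA J'_def by blast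
          show "K' \<subseteq> {i. good n k (Suc r) (U - S) (C \<union> A) i}" using gK by blast
          show "J' \<inter> K' = {}" using Suc.prems(4) fA J'_def K'_def by blast
          show "finite J'" using Suc.prems(5) finA J'_def by simp
          show "finite K'" using Suc.prems(6) K'_def by simp
          show "(a + b) ^ r \<le> card J' + t" using cJ' Suc.prems(7) a by simp
          show "(a + b) * t \<le> card K'" using cK' Suc.prems(8) by simp
        qed
      qed
      note W = this
      show ?thesis by (rule round[OF cU SU cS]) (use W in auto)
    qed
  qed
  have "0 < card I" using Suc.prems(3) a by simp
  then have fI: "finite I" using card_gt_0_iff by blast
  show ?case
    by (rule inner[where t="(a+b)^r" and U=U and C=C and J="{}" and K=I])
       (use Suc.prems(1) in simp, simp, use Suc.prems(2) in simp, simp, simp, fact fI, simp,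
        use Suc.prems(3) in simp)
qed

theorem mainTheorem17:
  fixes a b k :: nat
  assumes "0 < a" and "0 < b" and "0 < k"
  shows "\<exists>N. \<forall>n\<ge>N. box_waiter_wins a b n k"
proof (intro exI allI impI)
  fix n assume n: "(a+b)^k \<le> n"
  have "{0..<(a+b)^k} \<subseteq> {i. good n k k (box_board n k) {} i}"
  proof
    fix i assume "i \<in> {0..<(a+b)^k}"
    then have i: "i < n" using n by simp
    then have "box k i \<subseteq> box_board n k" by (auto simp: box_def box_board_def)
    moreover have "box k i \<inter> box_board n k = {i} \<times> {0..<k}"
      using i by (auto simp: box_def box_board_def)
    then have "card (box k i \<inter> box_board n k) \<le> k" by (simp add: card_cartesian_product)
    ultimately show "i \<in> {i. good n k k (box_board n k) {} i}" using i by (auto simp: good_def)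
  qed
  note sub = this
  have fin: "finite (box_board n k)" by (simp add: box_board_def)
  have c: "card {0..<(a+b)^k} = (a+b)^k" by (rule card_atLeastLessThan[THEN trans]) simp
  show "box_waiter_wins a b n k"
    unfolding box_waiter_wins_def
    by (rule level[OF assms(1) fin sub c])
qed

end
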